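(* Let $g_n(y)=\sum_{[\pi]\in\mathfrak{C}_{n}^o}y^{\operatorname{drop}_{eo}([\pi])}$. Then $g_1=1$ and for every $n\ge1$: (i) $g_{2n}=nyg_{2n-1}-y^2\frac{d}{dy}g_{2n-1}+y\frac{d}{dy}g_{2n-1}$; (ii) $g_{2n+1}=ng_{2n}-y\frac{d}{dy}g_{2n}+\frac{d}{dy}g_{2n}$.
   Context: For $n\ge1$, a cycle on $[n]=\{1,\dots,n\}$ is an equivalence class $[\pi]$ of permutations $\pi=\pi_1\cdots\pi_n$ of $[n]$ (in one-line notation) under cyclic rotation of the entries; the set of cycles on $[n]$ is $\mathfrak{C}_n$. Each cycle is represented by the permutation $\pi$ with $\pi_1=1$, and indices are read modulo $n$. A drop of $[\pi]$ is a consecutive pair $(\pi_i,\pi_{i+1})$, $1\le i\le n$, with $\pi_i>\pi_{i+1}$. By convention, the unique cycle $[(1)]\in\mathfrak{C}_1$ has exactly one drop $(\star,1)$, where $\star$ is considered neither even nor odd. A drop $(a,b)$ is even-odd if $a$ is even and $b$ is odd; $\operatorname{drop}_{eo}([\pi])$ is the number of even-odd drops of $[\pi]$. $\mathfrak{C}_n^o$ is the set of cycles $[\pi]\in\mathfrak{C}_n$ such that for every drop $(\pi_i,\pi_{i+1})$, the entry $\pi_{i+1}$ is odd. *)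

theory Defs
  imports "HOL-Computational_Algebra.Polynomial"
begin

text \<open>A cycle on [n] is represented by its unique representative permutation
  (in one-line notation, as a list) whose first entry is 1.\<close>
definition cycles :: "nat \<Rightarrow> nat list set" where
  "cycles n = {xs. distinct xs \<and> set xs = {1..n} \<and> hd xs = 1}"

definition is_drop :: "nat list \<Rightarrow> nat \<Rightarrow> bool" where
  "is_drop xs i \<longleftrightarrow> xs ! ((i + 1) mod length xs) < xs ! i"

text \<open>Number of even-odd drops. For n = 1 the unique drop is (star,1),
  which is not even-odd.\<close>
definition drop_eo :: "nat list \<Rightarrow> nat" where
  "drop_eo xs = (if length xs = 1 then 0 else
     card {i. i < length xs \<and> is_drop xs i \<and> even (xs ! i)
              \<and> odd (xs ! ((i + 1) mod length xs))})"

text \<open>Cycles all of whose drops end in an odd entry. For n = 1 the unique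
  drop (star,1) ends in the odd entry 1.\<close>
definition cycles_o :: "nat \<Rightarrow> nat list set" where
  "cycles_o n = {xs \<in> cycles n.
     (length xs = 1 \<longrightarrow> odd (1::nat)) \<and>
     (length xs \<noteq> 1 \<longrightarrow> (\<forall>i < length xs. is_drop xs i \<longrightarrow> odd (xs ! ((i + 1) mod length xs))))}"

definition g :: "nat \<Rightarrow> int poly" where
  "g n = (\<Sum>xs \<in> cycles_o n. monom 1 (drop_eo xs))"

end

theory Submission
  imports Defs
begin


definition pairs :: "nat list \<Rightarrow> (nat \<times> nat) list" where
  "pairs xs = zip xs (rotate1 xs)"
definition eo :: "nat \<times> nat \<Rightarrow> bool" where
  "eo p \<longleftrightarrow> snd p < fst p \<and> even (fst p) \<and> odd (snd p)"
definition okp :: "nat \<times> nat \<Rightarrow> bool" where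
  "okp p \<longleftrightarrow> (snd p < fst p \<longrightarrow> odd (snd p))"
definition cnt :: "nat list \<Rightarrow> nat" where
  "cnt xs = length (filter eo (pairs xs))"
definition ins :: "nat \<Rightarrow> nat \<Rightarrow> nat list \<Rightarrow> nat list" where
  "ins m i xs = take (Suc i) xs @ m # drop (Suc i) xs"

lemma length_pairs[simp]: "length (pairs xs) = length xs"
  by (simp add: pairs_def)

lemma nth_pairs: "i < length xs \<Longrightarrow> pairs xs ! i = (xs ! i, xs ! (Suc i mod length xs))"
  by (simp add: pairs_def nth_rotate1)

lemma cycles_o_alt: "cycles_o n = {xs \<in> cycles n. \<forall>p\<in>set (pairs xs). okp p}"
proof -
  have "(\<forall>p\<in>set (pairs xs). okp p) \<longleftrightarrow>
     (length xs \<noteq> 1 \<longrightarrow> (\<forall>i < length xs. is_drop xs i \<longrightarrow> odd (xs ! ((i + 1) mod length xs))))" for xs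
  proof -
    have "(\<forall>p\<in>set (pairs xs). okp p) \<longleftrightarrow> (\<forall>i < length xs. okp (pairs xs ! i))"
      by (metis in_set_conv_nth length_pairs)
    also have "\<dots> \<longleftrightarrow> (\<forall>i < length xs. is_drop xs i \<longrightarrow> odd (xs ! ((i + 1) mod length xs)))"
      by (simp add: nth_pairs okp_def is_drop_def)
    finally show ?thesis
      by (cases "length xs = 1") (auto simp: is_drop_def)
  qed
  then show ?thesis unfolding cycles_o_def by auto
qed

lemma drop_eo_alt: "drop_eo xs = cnt xs"
proof (cases "length xs = 1")
  case True
  then obtain a where "xs = [a]" by (cases xs) auto
  then show ?thesis by (simp add: drop_eo_def cnt_def pairs_def eo_def)
next
  case False
  have "cnt xs = card {i. i < length xs \<and> eo (pairs xs ! i)}"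
    by (simp add: cnt_def length_filter_conv_card)
  also have "\<dots> = card {i. i < length xs \<and> is_drop xs i \<and> even (xs ! i)
              \<and> odd (xs ! ((i + 1) mod length xs))}"
    by (rule arg_cong[where f=card]) (auto simp: nth_pairs eo_def is_drop_def)
  finally show ?thesis using False by (simp add: drop_eo_def)
qed

lemma length_ins[simp]: "length (ins m i xs) = Suc (length xs)"
  by (simp add: ins_def)

lemma pairs_ins:
  assumes "i < length xs"
  shows "pairs (ins m i xs) = take i (pairs xs) @ [(xs!i, m), (m, xs ! (Suc i mod length xs))] @ drop (Suc i) (pairs xs)"
proof (rule nth_equalityI)
  show "length (pairs (ins m i xs)) = length (take i (pairs xs) @ [(xs!i, m), (m, xs ! (Suc i mod length xs))] @ drop (Suc i) (pairs xs))"
    using assms by simp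
next
  fix j assume j: "j < length (pairs (ins m i xs))"
  then have j': "j < Suc (length xs)" by simp
  have pj: "pairs (ins m i xs) ! j = (ins m i xs ! j, ins m i xs ! (Suc j mod Suc (length xs)))"
    using j' by (simp add: nth_pairs)
  consider "j < i" | "j = i" | "j = Suc i" | "Suc i < j" by linarith
  then show "pairs (ins m i xs) ! j = (take i (pairs xs) @ [(xs!i, m), (m, xs ! (Suc i mod length xs))] @ drop (Suc i) (pairs xs)) ! j"
  proof cases
    case 1
    then show ?thesis unfolding pj using assms j'
      by (simp add: nth_pairs ins_def nth_append min_def)
  next
    case 2
    then show ?thesis unfolding pj using assms j'
      by (simp add: nth_pairs ins_def nth_append min_def)
  next
    case 3
    then show ?thesis unfolding pj using assms j'
      by (cases "Suc i = length xs") (auto simp add: nth_pairs ins_def nth_append min_def)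
  next
    case 4
    then have e: "Suc (Suc (j - 2)) = j" by arith
    have e2: "Suc (Suc (length xs - 2)) = length xs" using 4 j' by arith
    from 4 show ?thesis unfolding pj using assms j'
      by (cases "j = length xs") (auto simp add: nth_pairs ins_def nth_append min_def nth_Cons' Suc_diff_Suc e e2)
  qed
qed


lemma x1: "[:0,1:] = (monom 1 1 :: int poly)" by (simp add: monom_altdef)
lemma x2: "[:0,0,1:] = (monom 1 2 :: int poly)" by (simp add: monom_altdef power2_eq_square)
lemma ofn: "(of_nat k :: int poly) * monom 1 d = monom (of_nat k) d"
  by (simp add: of_nat_poly smult_monom)
lemma even_id: "d \<le> n \<Longrightarrow> monom (of_nat d) d + monom (of_nat (n-d)) (d+1) =
   smult (of_nat n) ([:0,1:] * monom (1::int) d) - [:0,0,1:] * pderiv (monom 1 d) + [:0,1:] * pderiv (monom 1 d)"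
  unfolding x1 x2
  apply (cases d)
  apply (simp_all add: pderiv_monom mult_monom smult_monom of_nat_diff del: monom_Suc)
  apply (auto intro!: poly_eqI simp: coeff_pCons split: nat.split)
  done
lemma odd_id: "d \<le> n \<Longrightarrow> monom (of_nat d) (d-1) + monom (of_nat (n-d)) d =
   smult (of_nat n) (monom (1::int) d) - [:0,1:] * pderiv (monom 1 d) + pderiv (monom 1 d)"
  unfolding x1
  apply (cases d)
  apply (simp_all add: pderiv_monom mult_monom smult_monom of_nat_diff del: monom_Suc)
  apply (auto intro!: poly_eqI simp: coeff_pCons split: nat.split)
  done


lemma cnt_ins:
  assumes i: "i < length xs" and a: "xs ! i < m"
  shows "cnt (ins m i xs) + (if eo (xs!i, xs!(Suc i mod length xs)) then 1 else 0)
       = cnt xs + (if eo (m, xs!(Suc i mod length xs)) then 1 else 0)"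
proof -
  have P: "pairs xs = take i (pairs xs) @ pairs xs ! i # drop (Suc i) (pairs xs)"
    using i by (simp add: id_take_nth_drop)
  have "cnt xs = length (filter eo (take i (pairs xs))) + (if eo (pairs xs ! i) then 1 else 0)
      + length (filter eo (drop (Suc i) (pairs xs)))"
    unfolding cnt_def by (subst P) simp
  moreover have "cnt (ins m i xs) = length (filter eo (take i (pairs xs))) + (if eo (m, xs!(Suc i mod length xs)) then 1 else 0)
      + length (filter eo (drop (Suc i) (pairs xs)))"
    unfolding cnt_def pairs_ins[OF i] using a by (simp add: eo_def)
  ultimately show ?thesis using i by (simp add: nth_pairs)
qed

lemma okp_ins:
  assumes i: "i < length xs" and a: "xs ! i < m" and b: "xs!(Suc i mod length xs) < m"
  shows "(\<forall>p\<in>set (pairs (ins m i xs)). okp p) \<longleftrightarrow>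
     (\<forall>p\<in>set (pairs xs). okp p) \<and> odd (xs!(Suc i mod length xs))"
proof -
  have P: "pairs xs = take i (pairs xs) @ pairs xs ! i # drop (Suc i) (pairs xs)"
    using i by (simp add: id_take_nth_drop)
  have S: "set (pairs xs) = set (take i (pairs xs)) \<union> {pairs xs ! i} \<union> set (drop (Suc i) (pairs xs))"
    by (subst P) auto
  show ?thesis
    unfolding pairs_ins[OF i] S using a b i by (auto simp: okp_def nth_pairs)
qed

lemma ins_cycles:
  assumes xs: "xs \<in> cycles L" and i: "i < L"
  shows "ins (Suc L) i xs \<in> cycles (Suc L)"
proof -
  have d: "distinct xs" and s: "set xs = {1..L}" and h: "hd xs = 1" using xs by (auto simp: cycles_def)
  have "Suc L \<notin> set xs" using s by auto
  moreover have "distinct (take (Suc i) xs @ drop (Suc i) xs)" using d by simp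
  ultimately have "distinct (ins (Suc L) i xs)"
    unfolding ins_def distinct_append by (auto dest: in_set_takeD in_set_dropD)
  moreover have "set (ins (Suc L) i xs) = {1..Suc L}"
  proof -
    have "set (ins (Suc L) i xs) = insert (Suc L) (set (take (Suc i) xs @ drop (Suc i) xs))" unfolding ins_def
      by (simp only: set_append list.set) blast
    then show ?thesis using s by (simp add: atLeastAtMostSuc_conv)
  qed
  moreover have "hd (ins (Suc L) i xs) = 1"
  proof -
    have "xs \<noteq> []" using s i by auto
    then show ?thesis using h by (simp add: ins_def hd_append hd_take)
  qed
  ultimately show ?thesis by (simp add: cycles_def)
qed

lemma cycles_length: "xs \<in> cycles L \<Longrightarrow> length xs = L"
proof -
  assume "xs \<in> cycles L"
  then have "distinct xs" "set xs = {1..L}" by (auto simp: cycles_def)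
  then have "length xs = card {1..L}" by (metis distinct_card)
  then show "length xs = L" by simp
qed

lemma cycles_lt: "xs \<in> cycles L \<Longrightarrow> i < L \<Longrightarrow> xs ! i < Suc L"
  using cycles_length[of xs L] unfolding cycles_def
  by (metis (mono_tags, lifting) atLeastAtMost_iff le_imp_less_Suc mem_Collect_eq nth_mem)

lemma ins_decomp:
  assumes ys: "ys \<in> cycles (Suc L)" and L: "L \<ge> 1"
  shows "\<exists>xs i. xs \<in> cycles L \<and> i < L \<and> ys = ins (Suc L) i xs"
proof -
  have d: "distinct ys" and s: "set ys = {1..Suc L}" and h: "hd ys = 1" using ys by (auto simp: cycles_def)
  have len: "length ys = Suc L" using cycles_length[OF ys] .
  have "Suc L \<in> set ys" using s by auto
  then obtain k where k: "k < length ys" "ys ! k = Suc L" by (metis in_set_conv_nth)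
  have k0: "k \<noteq> 0"
  proof
    assume "k = 0"
    then have "hd ys = Suc L" using k len by (cases ys) auto
    then show False using h L by simp
  qed
  define xs where "xs = take k ys @ drop (Suc k) ys"
  have ys_eq: "ys = take k ys @ Suc L # drop (Suc k) ys"
    using k by (metis id_take_nth_drop)
  have d2: "distinct (take k ys @ Suc L # drop (Suc k) ys)"
    using d ys_eq by simp
  have nin: "Suc L \<notin> set xs" using d2 unfolding xs_def by auto
  have dx: "distinct xs" using d2 unfolding xs_def by auto
  have sx: "set xs = {1..L}"
  proof -
    have "set ys = insert (Suc L) (set xs)" unfolding xs_def
      by (subst ys_eq) auto
    then have "insert (Suc L) {1..L} = insert (Suc L) (set xs)" using s by (simp add: atLeastAtMostSuc_conv)
    then show ?thesis using nin by (simp add: insert_ident)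
  qed
  have hx: "hd xs = 1" using h k0 k unfolding xs_def
    by (metis append_take_drop_id hd_append2 take_eq_Nil)
  have "xs \<in> cycles L" using dx sx hx by (simp add: cycles_def)
  moreover have "k - 1 < L" using k len k0 by linarith
  moreover have "ys = ins (Suc L) (k - 1) xs"
  proof -
    have "take k xs = take k ys" "drop k xs = drop (Suc k) ys" using k unfolding xs_def by auto
    then show ?thesis unfolding ins_def using k0 ys_eq by simp
  qed
  ultimately show ?thesis by blast
qed

lemma ins_inj:
  assumes "m \<notin> set xs" "m \<notin> set xs'" "i < length xs" "i' < length xs'"
    and "ins m i xs = ins m i' xs'"
  shows "i = i' \<and> xs = xs'"
proof -
  have n1: "m \<notin> set (take (Suc i) xs)" "m \<notin> set (drop (Suc i) xs)"
    using assms(1) by (meson in_set_takeD, meson in_set_dropD)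
  have e: "take (Suc i) xs @ m # drop (Suc i) xs = take (Suc i') xs' @ m # drop (Suc i') xs'"
    using assms(5) unfolding ins_def by simp
  have tt: "take (Suc i) xs = take (Suc i') xs'" and dd: "drop (Suc i) xs = drop (Suc i') xs'"
    using append_Cons_eq_iff[OF n1, of "take (Suc i') xs'" "drop (Suc i') xs'"] e by auto
  have "length (take (Suc i) xs) = Suc i" "length (take (Suc i') xs') = Suc i'"
    using assms(3,4) by auto
  then have "i = i'" using tt by simp
  moreover have "xs = xs'" using tt dd by (metis append_take_drop_id)
  ultimately show ?thesis by simp
qed

lemma odd_set:
  fixes L n :: nat
  assumes L: "L = 2*n \<or> L = 2*n - 1"
  shows "{v \<in> {1..L}. odd v} = (\<lambda>k. 2*k+1) ` {..<n}"
proof (rule set_eqI, rule iffI)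
  fix v assume "v \<in> {v \<in> {1..L}. odd v}"
  then have v: "odd v" "v \<le> L" by auto
  then have "v = 2*(v div 2)+1" by presburger
  moreover have "v div 2 < n" using v L by presburger
  ultimately show "v \<in> (\<lambda>k. 2*k+1) ` {..<n}" by (metis lessThan_iff rev_image_eqI)
next
  fix v assume "v \<in> (\<lambda>k. 2*k+1) ` {..<n}"
  then obtain k where "k < n" "v = 2*k+1" by auto
  then show "v \<in> {v \<in> {1..L}. odd v}" using L by auto
qed

lemma card_odd:
  fixes L n :: nat
  assumes "L = 2*n \<or> L = 2*n - 1"
  shows "card {v \<in> {1..L}. odd v} = n"
proof -
  have "card {v \<in> {1..L}. odd v} = card ((\<lambda>k. 2*k+1) ` {..<n})"
    by (simp only: odd_set[OF assms])
  also have "\<dots> = n" by (simp add: card_image inj_on_def)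
  finally show ?thesis .
qed

lemma count_odd:
  assumes xs: "xs \<in> cycles L"
  shows "card {i. i < L \<and> odd (xs ! (Suc i mod L))} = card {v \<in> {1..L}. odd v}"
proof -
  have len: "length xs = L" using cycles_length[OF xs] .
  have d: "distinct xs" and s: "set xs = {1..L}" using xs by (auto simp: cycles_def)
  have "card {i. i < L \<and> odd (xs ! (Suc i mod L))} = length (filter odd (rotate1 xs))"
    by (simp add: length_filter_conv_card len nth_rotate1 cong: conj_cong)
  also have "\<dots> = card (set (filter odd (rotate1 xs)))"
    by (rule distinct_card[symmetric]) (simp add: d)
  also have "\<dots> = card {v \<in> {1..L}. odd v}" using s by (simp add: Collect_conj_eq Int_commute)
  finally show ?thesis .
qed

lemma count_eo:
  assumes xs: "xs \<in> cycles L"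
  shows "card {i. i < L \<and> odd (xs ! (Suc i mod L)) \<and> eo (xs ! i, xs ! (Suc i mod L))} = cnt xs"
proof -
  have len: "length xs = L" using cycles_length[OF xs] .
  show ?thesis unfolding cnt_def length_filter_conv_card
    by (rule arg_cong[where f=card]) (auto simp: len nth_pairs eo_def)
qed



lemma finite_cycles: "finite (cycles L)"
proof (rule finite_subset)
  show "cycles L \<subseteq> {xs. set xs \<subseteq> {1..L} \<and> length xs \<le> L}"
    using cycles_length by (auto simp: cycles_def)
  show "finite {xs. set xs \<subseteq> {1..L} \<and> length xs \<le> L}"
    by (rule finite_lists_length_le) simp
qed

lemma finite_cycles_o: "finite (cycles_o L)"
  by (rule finite_subset[OF _ finite_cycles[of L]]) (auto simp: cycles_o_def)

definition II :: "nat \<Rightarrow> nat list \<Rightarrow> nat set" where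
  "II L xs = {i. i < L \<and> odd (xs ! (Suc i mod L))}"

lemma image_ins:
  assumes L: "L \<ge> 1"
  shows "cycles_o (Suc L) = (\<lambda>(xs,i). ins (Suc L) i xs) ` (SIGMA xs:cycles_o L. II L xs)"
proof (rule set_eqI, rule iffI)
  fix ys assume ys: "ys \<in> cycles_o (Suc L)"
  then have yc: "ys \<in> cycles (Suc L)" and yo: "\<forall>p\<in>set (pairs ys). okp p" by (auto simp: cycles_o_alt)
  obtain xs i where xs: "xs \<in> cycles L" and i: "i < L" and e: "ys = ins (Suc L) i xs"
    using ins_decomp[OF yc L] by blast
  have len: "length xs = L" using cycles_length[OF xs] .
  have a: "xs ! i < Suc L" using cycles_lt[OF xs i] .
  have b: "xs ! (Suc i mod length xs) < Suc L" using cycles_lt[OF xs] len L by simp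
  have "(\<forall>p\<in>set (pairs xs). okp p) \<and> odd (xs!(Suc i mod length xs))"
    using okp_ins[of i xs "Suc L", OF _ a b] yo e len i by simp
  then show "ys \<in> (\<lambda>(xs,i). ins (Suc L) i xs) ` (SIGMA xs:cycles_o L. II L xs)"
    using xs i e len by (force simp: cycles_o_alt II_def)
next
  fix ys assume "ys \<in> (\<lambda>(xs,i). ins (Suc L) i xs) ` (SIGMA xs:cycles_o L. II L xs)"
  then obtain xs i where xs: "xs \<in> cycles_o L" and i: "i \<in> II L xs" and e: "ys = ins (Suc L) i xs"
    by auto
  have xc: "xs \<in> cycles L" and xo: "\<forall>p\<in>set (pairs xs). okp p" using xs by (auto simp: cycles_o_alt)
  have len: "length xs = L" using cycles_length[OF xc] .
  have il: "i < L" and ob: "odd (xs ! (Suc i mod L))" using i by (auto simp: II_def)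
  have a: "xs ! i < Suc L" using cycles_lt[OF xc il] .
  have b: "xs ! (Suc i mod length xs) < Suc L" using cycles_lt[OF xc] len L by simp
  have "\<forall>p\<in>set (pairs ys). okp p"
    using okp_ins[of i xs "Suc L", OF _ a b] xo ob e len il by simp
  moreover have "ys \<in> cycles (Suc L)" using ins_cycles[OF xc il] e by simp
  ultimately show "ys \<in> cycles_o (Suc L)" by (simp add: cycles_o_alt)
qed

lemma inj_ins:
  shows "inj_on (\<lambda>(xs,i). ins (Suc L) i xs) (SIGMA xs:cycles_o L. II L xs)"
proof (rule inj_onI, clarify)
  fix xs i xs' i'
  assume xs: "xs \<in> cycles_o L" and "i \<in> II L xs" and xs': "xs' \<in> cycles_o L" and "i' \<in> II L xs'"
    and e: "ins (Suc L) i xs = ins (Suc L) i' xs'"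
  then have il: "i < L" "i' < L" by (auto simp: II_def)
  have xc: "xs \<in> cycles L" "xs' \<in> cycles L" using xs xs' by (auto simp: cycles_o_def)
  have "Suc L \<notin> set xs" "Suc L \<notin> set xs'" using xc by (auto simp: cycles_def)
  then show "xs = xs' \<and> i = i'" using ins_inj[OF _ _ _ _ e] il cycles_length[OF xc(1)] cycles_length[OF xc(2)]
    by auto
qed

lemma g_expand:
  assumes L: "L \<ge> 1"
  shows "g (Suc L) = (\<Sum>xs\<in>cycles_o L. \<Sum>i\<in>II L xs. monom 1 (cnt (ins (Suc L) i xs)))"
proof -
  have "g (Suc L) = (\<Sum>ys\<in>cycles_o (Suc L). monom 1 (cnt ys))"
    by (simp add: g_def drop_eo_alt)
  also have "\<dots> = (\<Sum>(xs,i)\<in>(SIGMA xs:cycles_o L. II L xs). monom 1 (cnt (ins (Suc L) i xs)))"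
    unfolding image_ins[OF L] by (subst sum.reindex[OF inj_ins]) (simp add: case_prod_beta o_def)
  also have "\<dots> = (\<Sum>xs\<in>cycles_o L. \<Sum>i\<in>II L xs. monom 1 (cnt (ins (Suc L) i xs)))"
    by (rule sum.Sigma[symmetric]) (auto simp: finite_cycles_o II_def)
  finally show ?thesis .
qed



lemma inner:
  assumes xs: "xs \<in> cycles_o L" and L: "L \<ge> 1"
  shows "cnt xs \<le> card {v \<in> {1..L}. odd v}"
    and "(\<Sum>i\<in>II L xs. monom (1::int) (cnt (ins (Suc L) i xs))) =
      (if even (Suc L) then monom (of_nat (cnt xs)) (cnt xs) + monom (of_nat (card {v \<in> {1..L}. odd v} - cnt xs)) (cnt xs + 1)
       else monom (of_nat (cnt xs)) (cnt xs - 1) + monom (of_nat (card {v \<in> {1..L}. odd v} - cnt xs)) (cnt xs))"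
proof -
  define d where "d = cnt xs"
  define n where "n = card {v \<in> {1..L}. odd v}"
  define E where "E = {i. eo (xs!i, xs!(Suc i mod L))}"
  have xc: "xs \<in> cycles L" using xs by (auto simp: cycles_o_def)
  have len: "length xs = L" using cycles_length[OF xc] .
  have fI: "finite (II L xs)" by (simp add: II_def)
  have cI: "card (II L xs) = n" unfolding n_def II_def using count_odd[OF xc] .
  have "II L xs \<inter> E = {i. i < L \<and> odd (xs ! (Suc i mod L)) \<and> eo (xs ! i, xs ! (Suc i mod L))}"
    by (auto simp: II_def E_def)
  then have cIE: "card (II L xs \<inter> E) = d" using count_eo[OF xc] by (simp add: d_def)
  have dn: "d \<le> n" using cI cIE fI by (metis Int_lower1 card_mono)
  then show "cnt xs \<le> card {v \<in> {1..L}. odd v}" by (simp add: d_def n_def)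
  have cIE2: "card (II L xs \<inter> - E) = n - d"
  proof -
    have "II L xs \<inter> - E = II L xs - (II L xs \<inter> E)" by auto
    then show ?thesis using cI cIE fI by (simp add: card_Diff_subset)
  qed
  define A where "A = (if even (Suc L) then d else d - 1)"
  define B where "B = (if even (Suc L) then d + 1 else d)"
  have step: "cnt (ins (Suc L) i xs) = (if i \<in> E then A else B)" if i: "i \<in> II L xs" for i
  proof -
    have il: "i < L" and ob: "odd (xs ! (Suc i mod L))" using i by (auto simp: II_def)
    have a: "xs ! i < Suc L" using cycles_lt[OF xc il] .
    have b: "xs ! (Suc i mod L) < Suc L" using cycles_lt[OF xc] L by simp
    have "eo (Suc L, xs ! (Suc i mod L)) \<longleftrightarrow> even (Suc L)" using b ob by (simp add: eo_def)
    moreover have "eo (xs ! i, xs ! (Suc i mod L)) \<Longrightarrow> d \<ge> 1"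
    proof -
      assume "eo (xs ! i, xs ! (Suc i mod L))"
      then have "i \<in> II L xs \<inter> E" using i by (simp add: E_def)
      then have "II L xs \<inter> E \<noteq> {}" by blast
      then show "d \<ge> 1" using cIE fI by (metis card_0_eq finite_Int less_one not_less)
    qed
    ultimately show ?thesis using cnt_ins[of i xs "Suc L", OF _ a] il len
      by (auto simp: A_def B_def E_def d_def split: if_splits)
  qed
  have "(\<Sum>i\<in>II L xs. monom (1::int) (cnt (ins (Suc L) i xs))) =
        (\<Sum>i\<in>II L xs. if i \<in> E then monom 1 A else monom 1 B)"
    by (rule sum.cong) (simp_all add: step)
  also have "\<dots> = (\<Sum>i\<in>II L xs \<inter> {i. i \<in> E}. monom 1 A) + (\<Sum>i\<in>II L xs \<inter> - {i. i \<in> E}. monom 1 B)"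
    by (rule sum.If_cases[OF fI])
  also have "\<dots> = of_nat d * monom 1 A + of_nat (n - d) * monom 1 B"
    using cIE cIE2 by simp
  also have "\<dots> = monom (of_nat d) A + monom (of_nat (n-d)) B" by (simp add: of_nat_poly smult_monom del: of_nat_diff)
  finally show "(\<Sum>i\<in>II L xs. monom (1::int) (cnt (ins (Suc L) i xs))) =
      (if even (Suc L) then monom (of_nat (cnt xs)) (cnt xs) + monom (of_nat (card {v \<in> {1..L}. odd v} - cnt xs)) (cnt xs + 1)
       else monom (of_nat (cnt xs)) (cnt xs - 1) + monom (of_nat (card {v \<in> {1..L}. odd v} - cnt xs)) (cnt xs))"
    unfolding A_def B_def d_def n_def by (cases "odd L") auto
qed



lemma pderiv_sum': "pderiv (sum f A) = (\<Sum>x\<in>A. pderiv (f x :: int poly))"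
  using higher_pderiv_sum[of 1 f A] by simp

lemma smult_sum_right: "smult c (sum f A) = (\<Sum>x\<in>A. smult c (f x :: int poly))"
  by (induction A rule: infinite_finite_induct) (simp_all add: smult_add_right)

lemma R_sum: "smult c (u * sum f A) - v * pderiv (sum f A) + w * pderiv (sum f A)
  = (\<Sum>x\<in>A. smult c (u * f x) - v * pderiv (f x) + w * pderiv (f x :: int poly))"
  by (simp only: pderiv_sum' sum_distrib_left smult_sum_right sum.distrib sum_subtractf)

lemma R1_sum: "finite A \<Longrightarrow>
  smult c ([:0,1:] * sum f A) - [:0,0,1:] * pderiv (sum f A) + [:0,1:] * pderiv (sum f A)
  = (\<Sum>x\<in>A. smult c ([:0,1:] * f x) - [:0,0,1:] * pderiv (f x) + [:0,1:] * pderiv (f x :: int poly))"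
  by (rule R_sum)

lemma R2_sum: "finite A \<Longrightarrow>
  smult c (sum f A) - [:0,1:] * pderiv (sum f A) + pderiv (sum f A)
  = (\<Sum>x\<in>A. smult c (f x) - [:0,1:] * pderiv (f x) + pderiv (f x :: int poly))"
  using R_sum[of c 1 f A "[:0,1:]" 1] by simp

lemma g_cnt: "g L = (\<Sum>xs\<in>cycles_o L. monom 1 (cnt xs))"
  by (simp add: g_def drop_eo_alt)

lemma g1: "g 1 = 1"
proof -
  have c1: "cycles 1 = {[1]}"
  proof (rule set_eqI, rule iffI)
    fix xs assume xs: "xs \<in> cycles 1"
    then have "length xs = 1" "hd xs = 1" using cycles_length[OF xs] by (auto simp: cycles_def)
    then show "xs \<in> {[1]}" by (cases xs) auto
  next
    fix xs assume "xs \<in> {[1::nat]}"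
    then show "xs \<in> cycles 1" by (simp add: cycles_def)
  qed
  have "[1] \<in> cycles_o 1" using c1 by (simp add: cycles_o_def)
  moreover have "cycles_o 1 \<subseteq> cycles 1" by (auto simp: cycles_o_def)
  ultimately have "cycles_o 1 = {[1]}" using c1 by blast
  then show ?thesis by (simp add: g_def drop_eo_def)
qed

lemma g_even:
  assumes n: "n \<ge> 1"
  shows "g (2*n) = smult (of_nat n) ([:0,1:] * g (2*n-1))
                 - [:0,0,1:] * pderiv (g (2*n-1)) + [:0,1:] * pderiv (g (2*n-1))"
proof -
  define L where "L = 2*n - 1"
  have L: "L \<ge> 1" "2*n = Suc L" using n by (auto simp: L_def)
  have cn: "card {v \<in> {1..L}. odd v} = n" by (rule card_odd) (simp add: L_def)
  have "g (2*n) = (\<Sum>xs\<in>cycles_o L. \<Sum>i\<in>II L xs. monom 1 (cnt (ins (Suc L) i xs)))"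
    unfolding L(2) by (rule g_expand[OF L(1)])
  also have "\<dots> = (\<Sum>xs\<in>cycles_o L. smult (of_nat n) ([:0,1:] * monom 1 (cnt xs))
      - [:0,0,1:] * pderiv (monom 1 (cnt xs)) + [:0,1:] * pderiv (monom 1 (cnt xs)))"
  proof (rule sum.cong[OF refl])
    fix xs assume xs: "xs \<in> cycles_o L"
    have ev: "even (Suc L)" using L(2) by presburger
    show "(\<Sum>i\<in>II L xs. monom (1::int) (cnt (ins (Suc L) i xs))) = smult (of_nat n) ([:0,1:] * monom 1 (cnt xs))
      - [:0,0,1:] * pderiv (monom 1 (cnt xs)) + [:0,1:] * pderiv (monom 1 (cnt xs))"
    proof -
      have dn: "cnt xs \<le> n" using inner(1)[OF xs L(1)] cn by simp
      have "(\<Sum>i\<in>II L xs. monom (1::int) (cnt (ins (Suc L) i xs))) = monom (of_nat (cnt xs)) (cnt xs) + monom (of_nat (n - cnt xs)) (cnt xs + 1)"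
        using inner(2)[OF xs L(1)] unfolding cn if_P[OF ev] .
      then show ?thesis by (rule trans[OF _ even_id[OF dn]])
    qed
  qed
  also have "\<dots> = smult (of_nat n) ([:0,1:] * g L) - [:0,0,1:] * pderiv (g L) + [:0,1:] * pderiv (g L)"
    unfolding g_cnt by (rule R1_sum[symmetric]) (rule finite_cycles_o)
  finally show ?thesis by (simp add: L_def)
qed

lemma g_odd:
  assumes n: "n \<ge> 1"
  shows "g (2*n+1) = smult (of_nat n) (g (2*n)) - [:0,1:] * pderiv (g (2*n)) + pderiv (g (2*n))"
proof -
  define L where "L = 2*n"
  have L: "L \<ge> 1" "2*n+1 = Suc L" using n by (auto simp: L_def)
  have cn: "card {v \<in> {1..L}. odd v} = n" by (rule card_odd) (simp add: L_def)
  have "g (2*n+1) = (\<Sum>xs\<in>cycles_o L. \<Sum>i\<in>II L xs. monom 1 (cnt (ins (Suc L) i xs)))"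
    unfolding L(2) by (rule g_expand[OF L(1)])
  also have "\<dots> = (\<Sum>xs\<in>cycles_o L. smult (of_nat n) (monom 1 (cnt xs))
      - [:0,1:] * pderiv (monom 1 (cnt xs)) + pderiv (monom 1 (cnt xs)))"
  proof (rule sum.cong[OF refl])
    fix xs assume xs: "xs \<in> cycles_o L"
    have ev: "\<not> even (Suc L)" using L_def by presburger
    show "(\<Sum>i\<in>II L xs. monom (1::int) (cnt (ins (Suc L) i xs))) = smult (of_nat n) (monom 1 (cnt xs))
      - [:0,1:] * pderiv (monom 1 (cnt xs)) + pderiv (monom 1 (cnt xs))"
    proof -
      have dn: "cnt xs \<le> n" using inner(1)[OF xs L(1)] cn by simp
      have "(\<Sum>i\<in>II L xs. monom (1::int) (cnt (ins (Suc L) i xs))) = monom (of_nat (cnt xs)) (cnt xs - 1) + monom (of_nat (n - cnt xs)) (cnt xs)"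
        using inner(2)[OF xs L(1)] unfolding cn if_not_P[OF ev] .
      then show ?thesis by (rule trans[OF _ odd_id[OF dn]])
    qed
  qed
  also have "\<dots> = smult (of_nat n) (g L) - [:0,1:] * pderiv (g L) + pderiv (g L)"
    unfolding g_cnt by (rule R2_sum[symmetric]) (rule finite_cycles_o)
  finally show ?thesis by (simp add: L_def)
qed

theorem lemma4p1:
  shows "g 1 = 1 \<and>
    (\<forall>n::nat. n \<ge> 1 \<longrightarrow>
       g (2*n) = smult (of_nat n) ([:0,1:] * g (2*n-1))
                 - [:0,0,1:] * pderiv (g (2*n-1)) + [:0,1:] * pderiv (g (2*n-1)) \<and>
       g (2*n+1) = smult (of_nat n) (g (2*n))
                 - [:0,1:] * pderiv (g (2*n)) + pderiv (g (2*n)))"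
  using g1 g_even g_odd by blast


end
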